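(* Let $G$ be a star-like block graph on $n$ vertices with blocks $B_1,\dots,B_t$ of orders $b_1,\dots,b_t$, and let $k$ be an integer with $2\le k\le n$. Then $$SW_k(G)=(n-1)\binom{n-1}{k-1}-\sum_{i=1}^t\binom{b_i-1}{k}.$$
   Context: A block graph is a connected graph in which every block (maximal connected induced subgraph without cut vertices) is a clique. A star-like block graph is a block graph having a universal vertex (a vertex adjacent to all other vertices). For $S\subseteq V(G)$, the Steiner distance $d(S)$ is the minimum number of edges of a connected subgraph whose vertex set contains $S$, and $SW_k(G)=\sum_{|S|=k} d(S)$. Convention $\binom{m}{l}=0$ for $m<l$. *)

theory Defs
  imports Main
begin

definition simple_graph :: "'a set \<Rightarrow> 'a set set \<Rightarrow> bool" where
  "simple_graph V E \<longleftrightarrow> finite V \<and>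
     (\<forall>e\<in>E. \<exists>u v. e = {u, v} \<and> u \<noteq> v \<and> u \<in> V \<and> v \<in> V)"

definition adj_rel :: "'a set set \<Rightarrow> ('a \<times> 'a) set" where
  "adj_rel F = {(u, v). {u, v} \<in> F \<and> u \<noteq> v}"

definition connected_graph :: "'a set \<Rightarrow> 'a set set \<Rightarrow> bool" where
  "connected_graph W F \<longleftrightarrow> W \<noteq> {} \<and>
     (\<forall>u\<in>W. \<forall>v\<in>W. (u, v) \<in> (adj_rel F)\<^sup>*)"

definition is_subgraph :: "'a set \<Rightarrow> 'a set set \<Rightarrow> 'a set \<Rightarrow> 'a set set \<Rightarrow> bool" where
  "is_subgraph W F V E \<longleftrightarrow> W \<subseteq> V \<and> F \<subseteq> E \<and> (\<forall>e\<in>F. e \<subseteq> W)"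

definition induced_edges :: "'a set set \<Rightarrow> 'a set \<Rightarrow> 'a set set" where
  "induced_edges E W = {e \<in> E. e \<subseteq> W}"

definition steiner_dist :: "'a set \<Rightarrow> 'a set set \<Rightarrow> 'a set \<Rightarrow> nat" where
  "steiner_dist V E S = Min {card F | W F. is_subgraph W F V E \<and> connected_graph W F \<and> S \<subseteq> W}"

definition steiner_wiener :: "nat \<Rightarrow> 'a set \<Rightarrow> 'a set set \<Rightarrow> nat" where
  "steiner_wiener k V E = (\<Sum>S\<in>{S. S \<subseteq> V \<and> card S = k}. steiner_dist V E S)"

definition no_cut_vertex :: "'a set set \<Rightarrow> 'a set \<Rightarrow> bool" where
  "no_cut_vertex E B \<longleftrightarrow>
     (\<forall>v\<in>B. B - {v} = {} \<or> connected_graph (B - {v}) (induced_edges E (B - {v})))"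

definition good_block_candidate :: "'a set \<Rightarrow> 'a set set \<Rightarrow> 'a set \<Rightarrow> bool" where
  "good_block_candidate V E B \<longleftrightarrow> B \<subseteq> V \<and>
     connected_graph B (induced_edges E B) \<and> no_cut_vertex E B"

definition blocks :: "'a set \<Rightarrow> 'a set set \<Rightarrow> 'a set set" where
  "blocks V E = {B. good_block_candidate V E B \<and>
     (\<forall>B'. good_block_candidate V E B' \<and> B \<subseteq> B' \<longrightarrow> B' = B)}"

definition is_clique :: "'a set set \<Rightarrow> 'a set \<Rightarrow> bool" where
  "is_clique E B \<longleftrightarrow> (\<forall>u\<in>B. \<forall>v\<in>B. u \<noteq> v \<longrightarrow> {u, v} \<in> E)"

definition block_graph :: "'a set \<Rightarrow> 'a set set \<Rightarrow> bool" where
  "block_graph V E \<longleftrightarrow> simple_graph V E \<and> connected_graph V E \<and>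
     (\<forall>B\<in>blocks V E. is_clique E B)"

definition star_like_block_graph :: "'a set \<Rightarrow> 'a set set \<Rightarrow> bool" where
  "star_like_block_graph V E \<longleftrightarrow> block_graph V E \<and>
     (\<exists>u\<in>V. \<forall>v\<in>V. v \<noteq> u \<longrightarrow> {u, v} \<in> E)"

end

theory Submission
  imports Defs
begin


lemma rt_last:
  "(w,r) \<in> (A \<union> {(a,b),(b,a)})\<^sup>* \<Longrightarrow> (w,r) \<in> A\<^sup>* \<or> (a,r) \<in> A\<^sup>* \<or> (b,r) \<in> A\<^sup>*"
  by (induction rule: converse_rtrancl_induct) (auto intro: converse_rtrancl_into_rtrancl)

lemma rt_first:
  "(w,r) \<in> (A \<union> {(a,b),(b,a)})\<^sup>* \<Longrightarrow> (w,r) \<in> A\<^sup>* \<or> (w,a) \<in> A\<^sup>* \<or> (w,b) \<in> A\<^sup>*"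
  by (induction rule: rtrancl_induct) (auto intro: rtrancl_into_rtrancl)

lemma adj_insert: "a \<noteq> b \<Longrightarrow> adj_rel (insert {a,b} F) = adj_rel F \<union> {(a,b),(b,a)}"
  unfolding adj_rel_def by (auto simp: doubleton_eq_iff insert_commute)

lemma adj_empty: "adj_rel {} = {}" unfolding adj_rel_def by auto

lemma adj_mono: "F \<subseteq> F' \<Longrightarrow> adj_rel F \<subseteq> adj_rel F'"
  unfolding adj_rel_def by auto

lemma card_bound:
  assumes "finite F"
  shows "\<And>R. finite W \<Longrightarrow> R \<subseteq> W \<Longrightarrow> (\<forall>e\<in>F. \<exists>a b. e={a,b} \<and> a\<noteq>b \<and> a\<in>W \<and> b\<in>W)
     \<Longrightarrow> (\<forall>w\<in>W. \<exists>r\<in>R. (w,r) \<in> (adj_rel F)\<^sup>*) \<Longrightarrow> card W \<le> card F + card R"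
  using assms
proof (induction F rule: finite_induct)
  case empty
  then have "W \<subseteq> R" by (auto simp: adj_empty)
  moreover have "finite R" by (rule finite_subset[OF empty(2,1)])
  ultimately show ?case by (simp add: card_mono)
next
  case (insert e F R)
  have "\<exists>a b. e={a,b} \<and> a\<noteq>b \<and> a\<in>W \<and> b\<in>W" using insert.prems(3) by simp
  then obtain a b where e: "e = {a,b}" "a \<noteq> b" "a \<in> W" "b \<in> W" by blast
  have adj: "adj_rel (insert e F) = adj_rel F \<union> {(a,b),(b,a)}" using e adj_insert by simp
  define R' where "R' = (if \<exists>r\<in>R. (a,r) \<in> (adj_rel F)\<^sup>* then insert b R else insert a R)"
  have R'W: "R' \<subseteq> W" using insert.prems(2) e(3,4) unfolding R'_def by auto
  have cR': "card R' \<le> card R + 1"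
  proof -
    have "finite R" by (rule finite_subset[OF insert.prems(2,1)])
    then show ?thesis unfolding R'_def by (auto simp: card_insert_if)
  qed
  have cov: "\<forall>w\<in>W. \<exists>r\<in>R'. (w,r) \<in> (adj_rel F)\<^sup>*"
  proof
    fix w assume w: "w \<in> W"
    obtain r where r: "r \<in> R" "(w,r) \<in> (adj_rel F \<union> {(a,b),(b,a)})\<^sup>*"
      using insert.prems(4) w adj by metis
    have bW: "b \<in> W" by (rule e(4))
    obtain r' where r': "r' \<in> R" "(b,r') \<in> (adj_rel F \<union> {(a,b),(b,a)})\<^sup>*"
      using insert.prems(4) bW adj by metis
    from rt_first[OF r(2)] consider (c1) "(w,r) \<in> (adj_rel F)\<^sup>*" | (c2) "(w,a) \<in> (adj_rel F)\<^sup>*"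
        | (c3) "(w,b) \<in> (adj_rel F)\<^sup>*" by blast
    then show "\<exists>r\<in>R'. (w,r) \<in> (adj_rel F)\<^sup>*"
    proof cases
      case c1 then show ?thesis using r(1) unfolding R'_def by auto
    next
      case c2
      show ?thesis
      proof (cases "\<exists>r\<in>R. (a,r) \<in> (adj_rel F)\<^sup>*")
        case True
        then obtain r0 where r0: "r0 \<in> R" "(a,r0) \<in> (adj_rel F)\<^sup>*" by blast
        have "(w,r0) \<in> (adj_rel F)\<^sup>*" using c2 r0(2) by (rule rtrancl_trans)
        then show ?thesis using r0(1) True unfolding R'_def by auto
      next
        case False
        then show ?thesis using c2 unfolding R'_def by auto
      qed
    next
      case c3
      show ?thesis
      proof (cases "\<exists>r\<in>R. (a,r) \<in> (adj_rel F)\<^sup>*")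
        case True
        then show ?thesis using c3 unfolding R'_def by auto
      next
        case False
        from rt_last[OF r'(2)] have "(b,r') \<in> (adj_rel F)\<^sup>*" using False r'(1) by blast
        then have "(w,r') \<in> (adj_rel F)\<^sup>*" using c3 by (metis rtrancl_trans)
        then show ?thesis using r'(1) False unfolding R'_def by auto
      qed
    qed
  qed
  have eF: "\<forall>e\<in>F. \<exists>a b. e={a,b} \<and> a\<noteq>b \<and> a\<in>W \<and> b\<in>W" using insert.prems(3) by simp
  have "card W \<le> card F + card R'"
    by (rule insert.IH[OF insert.prems(1) R'W eF cov])
  then show ?case using cR' insert.hyps by simp
qed


lemma conn_mono: "connected_graph W F \<Longrightarrow> F \<subseteq> F' \<Longrightarrow> connected_graph W F'"
  unfolding connected_graph_def using rtrancl_mono[OF adj_mono] by blast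

context
  fixes V :: "'a set" and E :: "'a set set" and u :: 'a
  assumes sg: "simple_graph V E" and uV: "u \<in> V" and univ: "\<forall>v\<in>V. v \<noteq> u \<longrightarrow> {u,v} \<in> E"
begin

lemma finV: "finite V" using sg unfolding simple_graph_def by simp

lemma finE: "finite E"
proof -
  have "E \<subseteq> Pow V" using sg unfolding simple_graph_def by auto
  then show ?thesis using finV by (auto intro: finite_subset)
qed

lemma conn_bound:
  assumes "is_subgraph W F V E" "connected_graph W F"
  shows "card W \<le> card F + 1"
proof -
  obtain x where x: "x \<in> W" using assms(2) unfolding connected_graph_def by auto
  have fW: "finite W" using assms(1) finV unfolding is_subgraph_def by (auto intro: finite_subset)
  have fF: "finite F" using assms(1) finE unfolding is_subgraph_def by (auto intro: finite_subset)
  have edges: "\<forall>e\<in>F. \<exists>a b. e={a,b} \<and> a\<noteq>b \<and> a\<in>W \<and> b\<in>W"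
  proof
    fix e assume "e \<in> F"
    then have "e \<in> E" "e \<subseteq> W" using assms(1) unfolding is_subgraph_def by auto
    moreover obtain a b where "e = {a,b}" "a \<noteq> b" using sg \<open>e \<in> E\<close> unfolding simple_graph_def by blast
    ultimately show "\<exists>a b. e={a,b} \<and> a\<noteq>b \<and> a\<in>W \<and> b\<in>W" by auto
  qed
  have "\<forall>w\<in>W. \<exists>r\<in>{x}. (w,r) \<in> (adj_rel F)\<^sup>*" using assms(2) x unfolding connected_graph_def by auto
  from card_bound[OF fF fW _ edges this] x show ?thesis by simp
qed

lemma center_conn:
  assumes "X \<subseteq> V" "c \<in> X" "\<forall>x\<in>X. x \<noteq> c \<longrightarrow> {x,c} \<in> E"
  shows "connected_graph X (induced_edges E X)"
  unfolding connected_graph_def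
proof (intro conjI ballI)
  show "X \<noteq> {}" using assms by auto
  fix x y assume xy: "x \<in> X" "y \<in> X"
  have "(x,c) \<in> (adj_rel (induced_edges E X))\<^sup>*"
  proof (cases "x = c")
    case False
    then show ?thesis using assms xy unfolding adj_rel_def induced_edges_def
      by (intro r_into_rtrancl) auto
  qed simp
  moreover have "(c,y) \<in> (adj_rel (induced_edges E X))\<^sup>*"
  proof (cases "y = c")
    case False
    then have "{y,c} \<in> E" using assms xy by auto
    then have "{c,y} \<in> E" by (simp add: insert_commute)
    then show ?thesis using False assms xy unfolding adj_rel_def induced_edges_def
      by (intro r_into_rtrancl) auto
  qed simp
  ultimately show "(x,y) \<in> (adj_rel (induced_edges E X))\<^sup>*" by (rule rtrancl_trans)
qed

lemma star_conn: "u \<in> X \<Longrightarrow> X \<subseteq> V \<Longrightarrow> connected_graph X (induced_edges E X)"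
proof (rule center_conn)
  assume "u \<in> X" "X \<subseteq> V"
  show "\<forall>x\<in>X. x \<noteq> u \<longrightarrow> {x,u} \<in> E"
  proof (intro ballI impI)
    fix x assume "x \<in> X" "x \<noteq> u"
    then have "{u,x} \<in> E" using univ \<open>X \<subseteq> V\<close> by auto
    then show "{x,u} \<in> E" by (simp add: insert_commute)
  qed
qed

lemma clique_cand:
  assumes "X \<subseteq> V" "X \<noteq> {}" "is_clique E X"
  shows "good_block_candidate V E X"
  unfolding good_block_candidate_def no_cut_vertex_def
proof (intro conjI ballI)
  show "X \<subseteq> V" by fact
  obtain c where "c \<in> X" using assms by auto
  then show "connected_graph X (induced_edges E X)"
    using assms by (intro center_conn) (auto simp: is_clique_def)
  fix v assume "v \<in> X"
  show "X - {v} = {} \<or> connected_graph (X - {v}) (induced_edges E (X - {v}))"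
  proof (cases "X - {v} = {}")
    case False
    then obtain c where "c \<in> X - {v}" by auto
    then have "connected_graph (X - {v}) (induced_edges E (X - {v}))"
      using assms by (intro center_conn) (auto simp: is_clique_def)
    then show ?thesis by simp
  qed simp
qed

lemma block_cand: "B \<in> blocks V E \<Longrightarrow> good_block_candidate V E B"
  unfolding blocks_def by simp

lemma block_props: "B \<in> blocks V E \<Longrightarrow> B \<subseteq> V \<and> B \<noteq> {}"
proof -
  assume "B \<in> blocks V E"
  then have "good_block_candidate V E B" by (rule block_cand)
  then have "B \<subseteq> V" "connected_graph B (induced_edges E B)" unfolding good_block_candidate_def by simp_all
  then show ?thesis unfolding connected_graph_def by simp
qed

lemma block_has_u:
  assumes B: "B \<in> blocks V E" and cl: "is_clique E B"
  shows "u \<in> B"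
proof -
  have BV: "B \<subseteq> V" "B \<noteq> {}" using block_props[OF B] by auto
  have "is_clique E (insert u B)"
    unfolding is_clique_def
  proof (intro ballI impI)
    fix x y assume xy: "x \<in> insert u B" "y \<in> insert u B" "x \<noteq> y"
    show "{x,y} \<in> E"
    proof (cases "x = u")
      case True then show ?thesis using univ xy BV by auto
    next
      case False
      show ?thesis
      proof (cases "y = u")
        case True
        then have "{y,x} \<in> E" using univ xy BV False by auto
        then show ?thesis by (simp add: insert_commute)
      next
        case False
        then show ?thesis using \<open>x \<noteq> u\<close> xy cl unfolding is_clique_def by auto
      qed
    qed
  qed
  moreover have "insert u B \<subseteq> V" using BV uV by simp
  ultimately have c: "good_block_candidate V E (insert u B)"
    using clique_cand by blast
  have "\<forall>B'. good_block_candidate V E B' \<and> B \<subseteq> B' \<longrightarrow> B' = B" using B unfolding blocks_def by simp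
  then have "insert u B = B" using c by blast
  then show ?thesis by auto
qed

lemma exists_block:
  assumes "good_block_candidate V E C"
  shows "\<exists>B\<in>blocks V E. C \<subseteq> B"
proof -
  define Q where "Q = {B. good_block_candidate V E B \<and> C \<subseteq> B}"
  have "Q \<subseteq> Pow V" unfolding Q_def good_block_candidate_def by blast
  then have "finite Q" using finV by (auto intro: finite_subset)
  moreover have "Q \<noteq> {}" using assms unfolding Q_def by auto
  ultimately obtain B where B: "B \<in> Q" "\<forall>b\<in>Q. B \<le> b \<longrightarrow> B = b"
    using finite_has_maximal by blast
  have "good_block_candidate V E B" "C \<subseteq> B" using B(1) unfolding Q_def by simp_all
  moreover have "\<forall>B'. good_block_candidate V E B' \<and> B \<subseteq> B' \<longrightarrow> B' = B"
  proof (intro allI impI)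
    fix B' assume "good_block_candidate V E B' \<and> B \<subseteq> B'"
    then have "B' \<in> Q" "B \<le> B'" using \<open>C \<subseteq> B\<close> unfolding Q_def by auto
    then show "B' = B" using B(2) by metis
  qed
  ultimately show ?thesis unfolding blocks_def by blast
qed

lemma block_unique:
  assumes B1: "B1 \<in> blocks V E" and B2: "B2 \<in> blocks V E"
    and cl: "\<forall>B\<in>blocks V E. is_clique E B"
    and s: "s \<in> B1" "s \<in> B2" "s \<noteq> u"
  shows "B1 = B2"
proof -
  have uB: "u \<in> B1" "u \<in> B2" using block_has_u B1 B2 cl by auto
  have V: "B1 \<union> B2 \<subseteq> V" using block_props B1 B2 by auto
  have cand: "good_block_candidate V E (B1 \<union> B2)"
    unfolding good_block_candidate_def no_cut_vertex_def
  proof (intro conjI ballI)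
    show "B1 \<union> B2 \<subseteq> V" by fact
    show "connected_graph (B1 \<union> B2) (induced_edges E (B1 \<union> B2))"
      using star_conn uB V by auto
    fix v assume v: "v \<in> B1 \<union> B2"
    show "B1 \<union> B2 - {v} = {} \<or> connected_graph (B1 \<union> B2 - {v}) (induced_edges E (B1 \<union> B2 - {v}))"
    proof (cases "v = u")
      case False
      then show ?thesis using star_conn[of "B1 \<union> B2 - {v}"] uB V by auto
    next
      case True
      have "connected_graph (B1 \<union> B2 - {v}) (induced_edges E (B1 \<union> B2 - {v}))"
      proof (rule center_conn[of _ s])
        show "\<forall>x\<in>B1 \<union> B2 - {v}. x \<noteq> s \<longrightarrow> {x, s} \<in> E"
          using cl B1 B2 s unfolding is_clique_def by blast
      qed (use V s True in auto)
      then show ?thesis by simp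
    qed
  qed
  have m1: "\<forall>B'. good_block_candidate V E B' \<and> B1 \<subseteq> B' \<longrightarrow> B' = B1" using B1 unfolding blocks_def by simp
  have m2: "\<forall>B'. good_block_candidate V E B' \<and> B2 \<subseteq> B' \<longrightarrow> B' = B2" using B2 unfolding blocks_def by simp
  have "B1 \<union> B2 = B1" using m1 cand by blast
  moreover have "B1 \<union> B2 = B2" using m2 cand by blast
  ultimately show ?thesis by blast
qed

end


context
  fixes V :: "'a set" and E :: "'a set set" and u :: 'a
  assumes sg: "simple_graph V E" and uV: "u \<in> V" and univ: "\<forall>v\<in>V. v \<noteq> u \<longrightarrow> {u,v} \<in> E"
begin

lemmas finV' = finV[OF sg uV univ]
lemmas finE' = finE[OF sg uV univ]
lemmas conn_bound' = conn_bound[OF sg uV univ]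
lemmas star_conn' = star_conn[OF sg uV univ]
lemmas exists_block' = exists_block[OF sg uV univ]

lemma sd_fin: "finite {card F | W F. is_subgraph W F V E \<and> connected_graph W F \<and> S \<subseteq> W}"
proof -
  have "{card F | W F. is_subgraph W F V E \<and> connected_graph W F \<and> S \<subseteq> W} \<subseteq> card ` Pow E"
    unfolding is_subgraph_def by blast
  then show ?thesis by (rule finite_subset) (simp add: finE')
qed

lemma star_witness:
  assumes "T \<subseteq> V" "c \<in> T" "\<forall>t\<in>T. t \<noteq> c \<longrightarrow> {c,t} \<in> E"
  shows "\<exists>F. is_subgraph T F V E \<and> connected_graph T F \<and> card F = card T - 1"
proof -
  define F where "F = (\<lambda>t. {c,t}) ` (T - {c})"
  have fT: "finite T" using assms(1) finV' by (auto intro: finite_subset)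
  have inj: "inj_on (\<lambda>t. {c,t}) (T - {c})"
    by (rule inj_onI) (auto simp: doubleton_eq_iff)
  have "card F = card (T - {c})" unfolding F_def using card_image[OF inj] .
  also have "\<dots> = card T - 1" using assms(2) fT by simp
  finally have cF: "card F = card T - 1" .
  have sub: "is_subgraph T F V E" unfolding is_subgraph_def F_def using assms by auto
  have "connected_graph T F"
    unfolding connected_graph_def
  proof (intro conjI ballI)
    show "T \<noteq> {}" using assms by auto
    fix x y assume xy: "x \<in> T" "y \<in> T"
    have "(x,c) \<in> (adj_rel F)\<^sup>*"
    proof (cases "x = c")
      case False
      have "{c,x} \<in> F" unfolding F_def using xy False by auto
      then have "{x,c} \<in> F" by (simp add: insert_commute)
      then show ?thesis using False unfolding adj_rel_def by (intro r_into_rtrancl) auto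
    qed simp
    moreover have "(c,y) \<in> (adj_rel F)\<^sup>*"
    proof (cases "y = c")
      case False
      have "{c,y} \<in> F" unfolding F_def using xy False by auto
      then show ?thesis using False unfolding adj_rel_def by (intro r_into_rtrancl) auto
    qed simp
    ultimately show "(x,y) \<in> (adj_rel F)\<^sup>*" by (rule rtrancl_trans)
  qed
  then show ?thesis using sub cF by blast
qed

lemma sd_le:
  assumes "is_subgraph W F V E" "connected_graph W F" "S \<subseteq> W"
  shows "steiner_dist V E S \<le> card F"
  unfolding steiner_dist_def
  by (rule Min_le[OF sd_fin]) (use assms in blast)

lemma star_bound:
  assumes "T \<subseteq> V" "c \<in> T" "\<forall>t\<in>T. t \<noteq> c \<longrightarrow> {c,t} \<in> E" "S \<subseteq> T"
  shows "steiner_dist V E S \<le> card T - 1"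
proof -
  obtain F where "is_subgraph T F V E" "connected_graph T F" "card F = card T - 1"
    using star_witness[OF assms(1-3)] by blast
  then show ?thesis using sd_le[of T F S] assms(4) by simp
qed

lemma sd_attained:
  assumes "S \<subseteq> V"
  shows "\<exists>W F. is_subgraph W F V E \<and> connected_graph W F \<and> S \<subseteq> W \<and> card F = steiner_dist V E S"
proof -
  have "\<forall>t\<in>insert u S. t \<noteq> u \<longrightarrow> {u,t} \<in> E" using univ assms by auto
  then obtain F where "is_subgraph (insert u S) F V E" "connected_graph (insert u S) F"
    using star_witness[of "insert u S" u] assms uV by auto
  then have ne: "{card F | W F. is_subgraph W F V E \<and> connected_graph W F \<and> S \<subseteq> W} \<noteq> {}" by blast
  have "steiner_dist V E S \<in> {card F | W F. is_subgraph W F V E \<and> connected_graph W F \<and> S \<subseteq> W}"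
    unfolding steiner_dist_def by (rule Min_in[OF sd_fin ne])
  then obtain W F where "steiner_dist V E S = card F" "is_subgraph W F V E" "connected_graph W F" "S \<subseteq> W"
    by blast
  then show ?thesis by metis
qed

lemma sd_lower:
  assumes "S \<subseteq> V"
  shows "card S - 1 \<le> steiner_dist V E S"
proof -
  obtain W F where WF: "is_subgraph W F V E" "connected_graph W F" "S \<subseteq> W" "card F = steiner_dist V E S"
    using sd_attained[OF assms] by blast
  have "finite W" using WF(1) finV' unfolding is_subgraph_def by (auto intro: finite_subset)
  then have "card S \<le> card W" using WF(3) by (rule card_mono)
  then show ?thesis using conn_bound'[OF WF(1,2)] WF(4) by simp
qed

lemma clique_edge: "is_clique E B \<Longrightarrow> x \<in> B \<Longrightarrow> y \<in> B \<Longrightarrow> x \<noteq> y \<Longrightarrow> {x,y} \<in> E"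
  unfolding is_clique_def by blast

lemma sd_val:
  assumes cl: "\<forall>B\<in>blocks V E. is_clique E B"
    and S: "S \<subseteq> V" "card S = k" "2 \<le> k"
  shows "steiner_dist V E S = (if u \<notin> S \<and> \<not>(\<exists>B\<in>blocks V E. S \<subseteq> B) then k else k - 1)"
proof -
  have fS: "finite S" using S finV' by (auto intro: finite_subset)
  have low: "k - 1 \<le> steiner_dist V E S" using sd_lower[OF S(1)] S(2) by simp
  show ?thesis
  proof (cases "u \<in> S")
    case True
    have "\<forall>t\<in>S. t \<noteq> u \<longrightarrow> {u,t} \<in> E" using univ S by auto
    then have "steiner_dist V E S \<le> card S - 1" using star_bound[OF S(1) True] by simp
    then show ?thesis using low True S by simp
  next
    case uS: False
    show ?thesis
    proof (cases "\<exists>B\<in>blocks V E. S \<subseteq> B")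
      case True
      then obtain B where B: "B \<in> blocks V E" "S \<subseteq> B" by blast
      have "S \<noteq> {}" using S(2,3) by (metis card.empty not_numeral_le_zero)
      then obtain c where c: "c \<in> S" by blast
      have "is_clique E B" using cl B(1) by blast
      then have "\<forall>t\<in>S. t \<noteq> c \<longrightarrow> {c,t} \<in> E" using B(2) c clique_edge by blast
      then have "steiner_dist V E S \<le> card S - 1" using star_bound[OF S(1) c] by simp
      then show ?thesis using low True S by simp
    next
      case nB: False
      have "\<forall>t\<in>insert u S. t \<noteq> u \<longrightarrow> {u,t} \<in> E" using univ S by auto
      then have "steiner_dist V E S \<le> card (insert u S) - 1"
        using star_bound[of "insert u S" u S] S uV by auto
      then have up: "steiner_dist V E S \<le> k" using fS uS S by simp
      have "steiner_dist V E S \<noteq> k - 1"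
      proof
        assume eq: "steiner_dist V E S = k - 1"
        obtain W F where WF: "is_subgraph W F V E" "connected_graph W F" "S \<subseteq> W" "card F = steiner_dist V E S"
          using sd_attained[OF S(1)] by blast
        have fW: "finite W" using WF(1) finV' unfolding is_subgraph_def by (auto intro: finite_subset)
        have "card W \<le> card S" using conn_bound'[OF WF(1,2)] WF(4) eq S by simp
        then have WS: "W = S" using card_seteq[OF fW WF(3)] by simp
        have "F \<subseteq> induced_edges E S" using WF(1) WS unfolding is_subgraph_def induced_edges_def by auto
        then have connS: "connected_graph S (induced_edges E S)" using conn_mono WF(2) WS by blast
        have cand: "good_block_candidate V E (insert u S)"
          unfolding good_block_candidate_def no_cut_vertex_def
        proof (intro conjI ballI)
          show "insert u S \<subseteq> V" using S uV by simp
          show "connected_graph (insert u S) (induced_edges E (insert u S))"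
            using star_conn' S uV by simp
          fix v assume v: "v \<in> insert u S"
          show "insert u S - {v} = {} \<or> connected_graph (insert u S - {v}) (induced_edges E (insert u S - {v}))"
          proof (cases "v = u")
            case True
            then have "insert u S - {v} = S" using uS by auto
            then show ?thesis using connS by simp
          next
            case False
            then show ?thesis using star_conn'[of "insert u S - {v}"] S uV by auto
          qed
        qed
        obtain B where "B \<in> blocks V E" "insert u S \<subseteq> B" using exists_block'[OF cand] by blast
        then show False using nB by auto
      qed
      then show ?thesis using low up nB uS by simp
    qed
  qed
qed

end


lemma binom_id:
  assumes "1 \<le> n" "1 \<le> k"
  shows "(n - 1) * ((n - 1) choose (k - 1)) = (k - 1) * (n choose k) + ((n - 1) choose k)"
proof -
  obtain m where m: "n = Suc m" using assms by (cases n) auto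
  obtain j where j: "k = Suc j" using assms by (cases k) auto
  have A: "Suc m * (m choose j) = (Suc m choose Suc j) * Suc j" by (rule Suc_times_binomial_eq)
  have B: "Suc m choose Suc j = (m choose j) + (m choose Suc j)" by (rule binomial_Suc_Suc)
  have "m * (m choose j) + (m choose j) = j * (Suc m choose Suc j) + (Suc m choose Suc j)"
    using A by (simp add: algebra_simps)
  then have "m * (m choose j) = j * (Suc m choose Suc j) + (m choose Suc j)" using B by linarith
  then show ?thesis using m j by simp
qed

theorem mainTheorem6:
  fixes V :: "'a set" and E :: "'a set set" and k :: nat
  assumes "star_like_block_graph V E"
    and "2 \<le> k" and "k \<le> card V"
  shows "int (steiner_wiener k V E) =
     int ((card V - 1) * ((card V - 1) choose (k - 1)))
     - (\<Sum>B\<in>blocks V E. int ((card B - 1) choose k))"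
proof -
  have bg: "block_graph V E" using assms(1) unfolding star_like_block_graph_def by simp
  obtain u where uV: "u \<in> V" and univ: "\<forall>v\<in>V. v \<noteq> u \<longrightarrow> {u,v} \<in> E"
    using assms(1) unfolding star_like_block_graph_def by blast
  have sg: "simple_graph V E" using bg unfolding block_graph_def by simp
  have cl: "\<forall>B\<in>blocks V E. is_clique E B" using bg unfolding block_graph_def by simp
  have fV: "finite V" using finV[OF sg uV univ] .
  define n where "n = card V"
  define SS where "SS = {S. S \<subseteq> V \<and> card S = k}"
  define P where "P = (\<lambda>S. u \<notin> S \<and> \<not>(\<exists>B\<in>blocks V E. S \<subseteq> B))"
  have fSS: "finite SS"
  proof -
    have "SS \<subseteq> Pow V" unfolding SS_def by blast
    then show ?thesis by (rule finite_subset) (simp add: fV)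
  qed
  have "steiner_wiener k V E = (\<Sum>S\<in>SS. (k - 1) + (if P S then 1 else 0))"
    unfolding steiner_wiener_def SS_def[symmetric]
  proof (rule sum.cong)
    fix S assume "S \<in> SS"
    then have "S \<subseteq> V" "card S = k" unfolding SS_def by auto
    then have "steiner_dist V E S = (if P S then k else k - 1)"
      using sd_val[OF sg uV univ cl _ _ assms(2)] unfolding P_def by blast
    then show "steiner_dist V E S = (k - 1) + (if P S then 1 else 0)" using assms(2) by simp
  qed simp
  also have "\<dots> = (k - 1) * card SS + card {S \<in> SS. P S}"
  proof -
    have "(\<Sum>S\<in>SS. (if P S then 1 else 0)) = (\<Sum>S\<in>{S \<in> SS. P S}. (1::nat))"
      using sum.inter_filter[OF fSS, of "\<lambda>_. (1::nat)" P] by simp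
    then show ?thesis by (simp add: sum.distrib)
  qed
  finally have SW: "steiner_wiener k V E = (k - 1) * card SS + card {S \<in> SS. P S}" .
  have cSS: "card SS = n choose k" unfolding SS_def n_def using n_subsets[OF fV] .
  define U where "U = {S. S \<subseteq> V - {u} \<and> card S = k}"
  have cU: "card U = (n - 1) choose k" unfolding U_def n_def
    using n_subsets[of "V - {u}" k] fV uV by simp
  define A where "A = (\<lambda>B. {S. S \<subseteq> B - {u} \<and> card S = k})"
  have blV: "\<And>B. B \<in> blocks V E \<Longrightarrow> B \<subseteq> V"
    using block_props[OF sg uV univ] by blast
  have fbl: "finite (blocks V E)"
  proof -
    have "blocks V E \<subseteq> Pow V" using blV by blast
    then show ?thesis by (rule finite_subset) (simp add: fV)
  qed
  have Ueq: "U = {S \<in> SS. P S} \<union> (\<Union>B\<in>blocks V E. A B)"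
  proof (rule set_eqI)
    fix S
    show "S \<in> U \<longleftrightarrow> S \<in> {S \<in> SS. P S} \<union> (\<Union>B\<in>blocks V E. A B)"
    proof
      assume "S \<in> U"
      then have S: "S \<subseteq> V" "u \<notin> S" "card S = k" unfolding U_def by auto
      show "S \<in> {S \<in> SS. P S} \<union> (\<Union>B\<in>blocks V E. A B)"
      proof (cases "P S")
        case True then show ?thesis using S unfolding SS_def by simp
      next
        case False
        then obtain B where B: "B \<in> blocks V E" "S \<subseteq> B" using S(2) unfolding P_def by blast
        then have "S \<in> A B" using S unfolding A_def by auto
        then show ?thesis using B(1) by blast
      qed
    next
      assume "S \<in> {S \<in> SS. P S} \<union> (\<Union>B\<in>blocks V E. A B)"
      then show "S \<in> U"
      proof
        assume "S \<in> {S \<in> SS. P S}"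
        then show "S \<in> U" unfolding SS_def P_def U_def by auto
      next
        assume "S \<in> (\<Union>B\<in>blocks V E. A B)"
        then obtain B where B: "B \<in> blocks V E" "S \<in> A B" by blast
        then show "S \<in> U" using blV[OF B(1)] unfolding A_def U_def by auto
      qed
    qed
  qed
  have disj1: "{S \<in> SS. P S} \<inter> (\<Union>B\<in>blocks V E. A B) = {}"
  proof -
    { fix S assume S: "S \<in> {S \<in> SS. P S}" "S \<in> (\<Union>B\<in>blocks V E. A B)"
      then obtain B where B: "B \<in> blocks V E" "S \<in> A B" by blast
      then have "S \<subseteq> B" unfolding A_def by auto
      moreover have "P S" using S(1) by simp
      ultimately have False using B(1) unfolding P_def by blast }
    then show ?thesis by blast
  qed
  have fA: "\<forall>B\<in>blocks V E. finite (A B)"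
  proof
    fix B assume "B \<in> blocks V E"
    then have "A B \<subseteq> Pow V" unfolding A_def using blV by blast
    then show "finite (A B)" by (rule finite_subset) (simp add: fV)
  qed
  have disj2: "\<forall>B1\<in>blocks V E. \<forall>B2\<in>blocks V E. B1 \<noteq> B2 \<longrightarrow> A B1 \<inter> A B2 = {}"
  proof (intro ballI impI)
    fix B1 B2 assume B: "B1 \<in> blocks V E" "B2 \<in> blocks V E" "B1 \<noteq> B2"
    show "A B1 \<inter> A B2 = {}"
    proof (rule ccontr)
      assume "A B1 \<inter> A B2 \<noteq> {}"
      then obtain S where S: "S \<subseteq> B1 - {u}" "S \<subseteq> B2 - {u}" "card S = k" unfolding A_def by blast
      have "S \<noteq> {}" using S(3) assms(2) by (metis card.empty not_numeral_le_zero)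
      then obtain s where "s \<in> S" by blast
      then have "s \<in> B1" "s \<in> B2" "s \<noteq> u" using S by auto
      then have "B1 = B2" using block_unique[OF sg uV univ B(1) B(2) cl] by blast
      then show False using B(3) by simp
    qed
  qed
  have cUB: "card (\<Union>B\<in>blocks V E. A B) = (\<Sum>B\<in>blocks V E. (card B - 1) choose k)"
  proof -
    have "card (\<Union>B\<in>blocks V E. A B) = (\<Sum>B\<in>blocks V E. card (A B))"
      by (rule card_UN_disjoint[OF fbl fA disj2])
    also have "\<dots> = (\<Sum>B\<in>blocks V E. (card B - 1) choose k)"
    proof (rule sum.cong)
      fix B assume B: "B \<in> blocks V E"
      have fB: "finite B" using blV[OF B] fV by (auto intro: finite_subset)
      have "u \<in> B" using block_has_u[OF sg uV univ B] cl B by blast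
      then have "card (B - {u}) = card B - 1" using fB by simp
      then show "card (A B) = (card B - 1) choose k" unfolding A_def using n_subsets[of "B - {u}" k] fB by simp
    qed simp
    finally show ?thesis .
  qed
  have fP: "finite {S \<in> SS. P S}" using fSS by simp
  have fUB: "finite (\<Union>B\<in>blocks V E. A B)" using fbl fA by blast
  have "card U = card {S \<in> SS. P S} + card (\<Union>B\<in>blocks V E. A B)"
    unfolding Ueq by (rule card_Un_disjoint[OF fP fUB disj1])
  then have N: "card {S \<in> SS. P S} + (\<Sum>B\<in>blocks V E. (card B - 1) choose k) = (n - 1) choose k"
    using cU cUB by simp
  have n1: "1 \<le> n" using assms(2,3) n_def by simp
  have id: "(n - 1) * ((n - 1) choose (k - 1)) = (k - 1) * (n choose k) + ((n - 1) choose k)"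
    using binom_id[OF n1] assms(2) by simp
  have sumint: "(\<Sum>B\<in>blocks V E. int ((card B - 1) choose k)) = int (\<Sum>B\<in>blocks V E. (card B - 1) choose k)"
    by (simp add: of_nat_sum)
  have e: "(n - 1) * ((n - 1) choose (k - 1)) = ((k - 1) * (n choose k) + card {S \<in> SS. P S}) + (\<Sum>B\<in>blocks V E. (card B - 1) choose k)"
    using N id by linarith
  have ei: "int ((n - 1) * ((n - 1) choose (k - 1))) = int ((k - 1) * (n choose k) + card {S \<in> SS. P S}) + int (\<Sum>B\<in>blocks V E. (card B - 1) choose k)"
    unfolding e by (rule of_nat_add)
  show ?thesis
    unfolding sumint n_def[symmetric] SW cSS using ei by linarith
qed


end
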